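(* Let $A=(A_1,A_2)\in V_2$ satisfy $\sigma_{12}(A)\neq 0$. Then $A$ is similar to a pair $B=(B_1,B_2)$ with $B_1^T=B_1$ and $B_2^T=B_2$.
   Context: $V_2=(M_{2\times2}(\mathbb{C}))^{\times 2}$ with $GL(2,\mathbb{C})$ acting by simultaneous conjugation; similar means same orbit. With $t_j=\mathsf{tr}(A_j)$, $t_{jk}=\mathsf{tr}(A_jA_k)$, $\tau_{jk}=t_{jk}-\tfrac12t_jt_k$ and $\sigma_{12}=\tau_{12}^2-\tau_{11}\tau_{22}$. $T$ denotes transposition. *)

theory Defs
  imports "HOL-Analysis.Analysis"
begin

type_synonym mat2 = "complex^2^2"

definition tau2 :: "mat2 \<Rightarrow> mat2 \<Rightarrow> complex" where
  "tau2 X Y = trace (X ** Y) - trace X * trace Y / 2"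

definition sigma12 :: "mat2 \<Rightarrow> mat2 \<Rightarrow> complex" where
  "sigma12 A1 A2 = (tau2 A1 A2)^2 - tau2 A1 A1 * tau2 A2 A2"

definition similar_pair :: "mat2 \<times> mat2 \<Rightarrow> mat2 \<times> mat2 \<Rightarrow> bool" where
  "similar_pair A B \<longleftrightarrow> (\<exists>P::mat2. invertible P \<and>
      fst B = P ** fst A ** matrix_inv P \<and> snd B = P ** snd A ** matrix_inv P)"

end

theory Submission
  imports Defs
begin

definition mk2 :: "complex \<Rightarrow> complex \<Rightarrow> complex \<Rightarrow> complex \<Rightarrow> mat2" where
  "mk2 w x y z = (\<chi> i j. if i = 1 then (if j = 1 then w else x) else (if j = 1 then y else z))"

lemma mk2_entries[simp]:
  "mk2 w x y z $ 1 $ 1 = w" "mk2 w x y z $ 1 $ 2 = x"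
  "mk2 w x y z $ 2 $ 1 = y" "mk2 w x y z $ 2 $ 2 = z"
  by (simp_all add: mk2_def)

lemma mat2_eq: "(A::mat2) = B \<longleftrightarrow> A$1$1 = B$1$1 \<and> A$1$2 = B$1$2 \<and> A$2$1 = B$2$1 \<and> A$2$2 = B$2$2"
  by (auto simp: vec_eq_iff forall_2)

lemma mult2: "((A::mat2) ** B) $ i $ j = A$i$1 * B$1$j + A$i$2 * B$2$j"
  by (simp add: matrix_matrix_mult_def sum_2)

lemma trace2: "trace (A::mat2) = A$1$1 + A$2$2"
  by (simp add: trace_def sum_2)

lemma sym_iff:
  assumes "\<mu> \<noteq> 0"
  shows "transpose (N::mat2) = N \<longleftrightarrow> trace (N ** mk2 0 \<mu> (-\<mu>) 0) = 0"
  using assms by (auto simp: mat2_eq transpose_def trace2 mult2 algebra_simps)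

lemma conj_exists:
  fixes Z :: mat2
  assumes tr: "Z$2$2 = - Z$1$1" and d: "det Z \<noteq> 0"
  shows "\<exists>P \<mu>. \<mu> \<noteq> 0 \<and> det P \<noteq> 0 \<and> P ** Z = mk2 0 \<mu> (-\<mu>) 0 ** P"
proof -
  define a where "a = Z$1$1"
  define b where "b = Z$1$2"
  define c where "c = Z$2$1"
  define \<mu> where "\<mu> = csqrt (det Z)"
  have mu2: "\<mu>*\<mu> = - (a*a) - b*c" unfolding \<mu>_def a_def b_def c_def using tr power2_csqrt[of "det Z", unfolded power2_eq_square] by (simp add: det_2)
  have mnz: "\<mu> \<noteq> 0" using d unfolding \<mu>_def by auto
  have "\<exists>p q. b*p*p - 2*a*p*q - c*q*q \<noteq> 0"
  proof (cases "b = 0")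
    case False then show ?thesis by (rule_tac x=1 in exI, rule_tac x=0 in exI) simp
  next
    case b: True
    show ?thesis
    proof (cases "c = 0")
      case False then show ?thesis by (rule_tac x=0 in exI, rule_tac x=1 in exI) simp
    next
      case True
      have "a \<noteq> 0" using d b True tr unfolding a_def b_def c_def by (simp add: det_2)
      then show ?thesis using b True by (rule_tac x=1 in exI, rule_tac x=1 in exI) simp
    qed
  qed
  then obtain p q where pq: "b*p*p - 2*a*p*q - c*q*q \<noteq> 0" by blast
  define P where "P = mk2 (\<mu>*p) (\<mu>*q) (p*a+q*c) (p*b-q*a)"
  have "det P = \<mu> * (b*p*p - 2*a*p*q - c*q*q)"
    unfolding P_def by (simp add: det_2 algebra_simps power2_eq_square)
  hence dP: "det P \<noteq> 0" using mnz pq by simp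
  have mm: "\<mu>*(\<mu>*x) = -(a*a+b*c)*x" for x using mu2
  proof -
    have "\<mu>*(\<mu>*x) = (\<mu>*\<mu>)*x" by (simp add: mult.assoc)
    also have "\<dots> = -(a*a+b*c)*x" using mu2 by simp
    finally show ?thesis .
  qed
  have "P ** Z = mk2 0 \<mu> (-\<mu>) 0 ** P"
    unfolding mat2_eq P_def mult2
    apply (simp add: tr a_def[symmetric] b_def[symmetric] c_def[symmetric] algebra_simps)
    using mu2 by algebra
  then show ?thesis using mnz dP by blast
qed

lemma poly: fixes a b c d e f g h :: complex
  shows "(a*e + b*g - (e*a + f*c)) * (c*f + d*h - (g*b + h*d)) - (a*f + b*h - (e*b+f*d)) * (c*e + d*g - (g*a+h*c))
   = - (((a*e+b*g+(c*f+d*h)) - (a+d)*(e+h)/2)^2 - ((a*a+b*c+(c*b+d*d)) - (a+d)*(a+d)/2) * ((e*e+f*g+(g*f+h*h)) - (e+h)*(e+h)/2))"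
  by (simp add: field_simps power2_eq_square)

theorem proposition2p12:
  fixes A1 A2 :: mat2
  assumes "sigma12 A1 A2 \<noteq> 0"
  shows "\<exists>B1 B2 :: mat2. similar_pair (A1, A2) (B1, B2) \<and>
           transpose B1 = B1 \<and> transpose B2 = B2"
proof -
  define Z where "Z = A1 ** A2 - A2 ** A1"
  have tr: "Z$2$2 = - Z$1$1" unfolding Z_def by (simp add: mult2 algebra_simps)
  have "det Z = - sigma12 A1 A2"
    unfolding Z_def sigma12_def tau2_def
    by (simp only: det_2 trace2 mult2 vector_minus_component) (rule poly)
  hence dZ: "det Z \<noteq> 0" using assms by simp
  obtain P \<mu> where mnz: "\<mu> \<noteq> 0" and dP: "det P \<noteq> 0"
    and PZ: "P ** Z = mk2 0 \<mu> (-\<mu>) 0 ** P"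
    using conj_exists[OF tr dZ] by blast
  define K where "K = mk2 0 \<mu> (-\<mu>) 0"
  define Pi where "Pi = matrix_inv P"
  have invP: "invertible P" using dP invertible_det_nz by blast
  have "P ** Pi = mat 1 \<and> Pi ** P = mat 1"
    unfolding Pi_def matrix_inv_def using invP unfolding invertible_def by (rule someI_ex)
  hence PPi: "P ** Pi = mat 1" and PiP: "Pi ** P = mat 1" by auto
  have KP: "K = P ** Z ** Pi"
  proof -
    have "K = K ** (P ** Pi)" by (simp add: PPi matrix_mul_rid)
    also have "\<dots> = (K ** P) ** Pi" by (simp only: matrix_mul_assoc)
    also have "\<dots> = P ** Z ** Pi" by (simp only: PZ K_def)
    finally show ?thesis .
  qed
  have key: "trace (P ** M ** Pi ** K) = 0" if "trace (M ** Z) = 0" for M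
  proof -
    have "P ** M ** Pi ** K = P ** M ** (Pi ** P) ** Z ** Pi"
      unfolding KP by (simp only: matrix_mul_assoc)
    also have "\<dots> = P ** (M ** Z) ** Pi" by (simp only: PiP matrix_mul_rid matrix_mul_assoc)
    finally have "trace (P ** M ** Pi ** K) = trace (P ** (M ** Z) ** Pi)" by simp
    also have "\<dots> = trace (Pi ** (P ** (M ** Z)))" by (rule trace_mul_sym)
    also have "\<dots> = trace ((Pi ** P) ** (M ** Z))" by (simp only: matrix_mul_assoc)
    also have "\<dots> = trace (M ** Z)" by (simp only: PiP matrix_mul_lid)
    finally show ?thesis using that by simp
  qed
  have t1: "trace (A1 ** Z) = 0" unfolding Z_def by (simp add: trace2 mult2 algebra_simps)
  have t2: "trace (A2 ** Z) = 0" unfolding Z_def by (simp add: trace2 mult2 algebra_simps)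
  have "similar_pair (A1, A2) (P ** A1 ** Pi, P ** A2 ** Pi)"
    unfolding similar_pair_def Pi_def using invP by auto
  moreover have "transpose (P ** A1 ** Pi) = P ** A1 ** Pi"
    using sym_iff[OF mnz] key[OF t1] K_def by simp
  moreover have "transpose (P ** A2 ** Pi) = P ** A2 ** Pi"
    using sym_iff[OF mnz] key[OF t2] K_def by simp
  ultimately show ?thesis by blast
qed

end
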